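(* Let $\mathbb{X},\mathbb{Y}$ be real normed linear spaces, $1\le p<\infty$, and $\mathbb{Z}=\mathbb{X}\oplus_p\mathbb{Y}$. Let $z_1=(x_1,y_1)$, $z_2=(x_2,y_2)\in\mathbb{Z}$ with $x_1,x_2\in\mathbb{X}\setminus\{0\}$ and $y_1,y_2\in\mathbb{Y}\setminus\{0\}$. (i) If $(z_1,z_2)$ is a parallel pair in $\mathbb{Z}$, then $(x_1,x_2)$ is a parallel pair in $\mathbb{X}$ and $(y_1,y_2)$ is a parallel pair in $\mathbb{Y}$. (ii) If $(z_1,z_2)$ is a TEA pair in $\mathbb{Z}$, then $(x_1,x_2)$ is a TEA pair in $\mathbb{X}$ and $(y_1,y_2)$ is a TEA pair in $\mathbb{Y}$.
   Context: For $1\le p<\infty$, $\mathbb{X}\oplus_p\mathbb{Y}$ is $\mathbb{X}\times\mathbb{Y}$ with norm $\|(x,y)\|=(\|x\|^p+\|y\|^p)^{1/p}$. $(x,y)$ is a parallel pair if $\|x+\lambda y\|=\|x\|+\|y\|$ for some scalar $\lambda$ with $|\lambda|=1$; $(x,y)$ is a TEA pair if $\|x+y\|=\|x\|+\|y\|$. *)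

theory Defs
  imports "HOL-Analysis.Analysis"
begin

text \<open>Vector operations on pairs are the componentwise ones of Product_Vector;
  the library's built-in norm on pairs (the 2-norm) is NOT used.\<close>
definition psum_norm :: "real \<Rightarrow> ('a::real_normed_vector \<times> 'b::real_normed_vector) \<Rightarrow> real" where
  "psum_norm p z = (norm (fst z) powr p + norm (snd z) powr p) powr (1 / p)"

definition parallel_pair :: "'a::real_normed_vector \<Rightarrow> 'a \<Rightarrow> bool" where
  "parallel_pair x y \<longleftrightarrow> (\<exists>c::real. \<bar>c\<bar> = 1 \<and> norm (x + c *\<^sub>R y) = norm x + norm y)"

definition tea_pair :: "'a::real_normed_vector \<Rightarrow> 'a \<Rightarrow> bool" where
  "tea_pair x y \<longleftrightarrow> norm (x + y) = norm x + norm y"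

definition psum_parallel_pair :: "real \<Rightarrow> ('a::real_normed_vector \<times> 'b::real_normed_vector) \<Rightarrow> ('a \<times> 'b) \<Rightarrow> bool" where
  "psum_parallel_pair p z w \<longleftrightarrow>
     (\<exists>c::real. \<bar>c\<bar> = 1 \<and> psum_norm p (z + c *\<^sub>R w) = psum_norm p z + psum_norm p w)"

definition psum_tea_pair :: "real \<Rightarrow> ('a::real_normed_vector \<times> 'b::real_normed_vector) \<Rightarrow> ('a \<times> 'b) \<Rightarrow> bool" where
  "psum_tea_pair p z w \<longleftrightarrow> psum_norm p (z + w) = psum_norm p z + psum_norm p w"

end

theory Submission
  imports Defs
begin

lemma mink2:
  fixes a b c d p :: real
  assumes p: "1 \<le> p" and pos: "a > 0" "b > 0" "c > 0" "d > 0"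
  shows "((a+c) powr p + (b+d) powr p) powr (1/p) \<le>
         (a powr p + b powr p) powr (1/p) + (c powr p + d powr p) powr (1/p)"
proof -
  define s where "s = (a powr p + b powr p) powr (1/p)"
  define t where "t = (c powr p + d powr p) powr (1/p)"
  have sp: "s powr p = a powr p + b powr p" unfolding s_def using p pos
    by (simp add: powr_powr)
  have tp: "t powr p = c powr p + d powr p" unfolding t_def using p pos
    by (simp add: powr_powr)
  have P0: "a powr p + b powr p > 0" "c powr p + d powr p > 0" using pos by (simp_all add: add_pos_pos)
  then have s0: "s > 0" "t > 0" unfolding s_def t_def by auto
  define th where "th = t / (s+t)"
  have th: "0 \<le> th" "th \<le> 1" "1 - th = s/(s+t)" using s0 unfolding th_def by (auto simp: field_simps)
  have cv: "convex_on {0<..} (\<lambda>x::real. x powr p)" using powr_convex p by blast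
  have gen: "((e+f)/(s+t)) powr p \<le> (1-th) * (e/s) powr p + th * (f/t) powr p"
    if "e > 0" "f > 0" for e f
  proof -
    have "(e+f)/(s+t) = (1-th) *\<^sub>R (e/s) + th *\<^sub>R (f/t)"
    proof -
      have "(1-th) *\<^sub>R (e/s) + th *\<^sub>R (f/t) = s/(s+t) * (e/s) + t/(s+t) * (f/t)"
        using th(3) unfolding th_def by simp
      also have "\<dots> = (e+f)/(s+t)" using s0 by (simp add: add_divide_distrib)
      finally show ?thesis by simp
    qed
    then show ?thesis using convex_onD[OF cv, of th "e/s" "f/t"] th that s0 by simp
  qed
  have "((a+c)/(s+t)) powr p + ((b+d)/(s+t)) powr p \<le>
     (1-th) * ((a/s) powr p + (b/s) powr p) + th * ((c/t) powr p + (d/t) powr p)"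
    using gen[of a c] gen[of b d] pos by (simp add: algebra_simps)
  also have "(a/s) powr p + (b/s) powr p = 1"
    using sp s0 pos P0 by (simp add: powr_divide add_divide_distrib[symmetric])
  also have "(c/t) powr p + (d/t) powr p = 1"
    using tp s0 pos P0 by (simp add: powr_divide add_divide_distrib[symmetric])
  finally have "((a+c) powr p + (b+d) powr p) / (s+t) powr p \<le> 1"
    using s0 pos by (simp add: powr_divide add_divide_distrib[symmetric])
  then have "(a+c) powr p + (b+d) powr p \<le> (s+t) powr p"
    using s0 by (simp add: divide_le_eq)
  then have "((a+c) powr p + (b+d) powr p) powr (1/p) \<le> ((s+t) powr p) powr (1/p)"
    using p pos by (intro powr_mono2) auto
  also have "\<dots> = s + t" using s0 p by (simp add: powr_powr)
  finally show ?thesis unfolding s_def t_def .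
qed

lemma key:
  fixes a b c d p u v :: real
  assumes p: "1 \<le> p" and pos: "a > 0" "b > 0" "c > 0" "d > 0"
    and uv: "0 \<le> u" "0 \<le> v" "u \<le> a + c" "v \<le> b + d"
    and eq: "(u powr p + v powr p) powr (1/p) =
         (a powr p + b powr p) powr (1/p) + (c powr p + d powr p) powr (1/p)"
  shows "u = a + c \<and> v = b + d"
proof -
  have u1: "u powr p \<le> (a+c) powr p" using uv p by (intro powr_mono2) auto
  have v1: "v powr p \<le> (b+d) powr p" using uv p by (intro powr_mono2) auto
  have "(u powr p + v powr p) powr (1/p) \<le> ((a+c) powr p + (b+d) powr p) powr (1/p)"
    using u1 v1 p by (intro powr_mono2) auto
  with mink2[OF p pos] eq have E: "(u powr p + v powr p) powr (1/p) = ((a+c) powr p + (b+d) powr p) powr (1/p)"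
    by linarith
  have "((u powr p + v powr p) powr (1/p)) powr p = ((((a+c) powr p + (b+d) powr p) powr (1/p))) powr p"
    using E by simp
  then have "u powr p + v powr p = (a+c) powr p + (b+d) powr p"
    using p by (simp add: powr_powr)
  then have "u powr p = (a+c) powr p" "v powr p = (b+d) powr p" using u1 v1 by linarith+
  then have "(u powr p) powr (1/p) = ((a+c) powr p) powr (1/p)"
     "(v powr p) powr (1/p) = ((b+d) powr p) powr (1/p)" by simp_all
  then show ?thesis using p uv pos by (simp add: powr_powr)
qed

lemma comp:
  fixes p :: real and x1 x2 :: "'a::real_normed_vector" and y1 y2 :: "'b::real_normed_vector"
    and l :: real
  assumes "1 \<le> p" "x1 \<noteq> 0" "x2 \<noteq> 0" "y1 \<noteq> 0" "y2 \<noteq> 0" "\<bar>l\<bar> = 1"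
    and "psum_norm p ((x1,y1) + l *\<^sub>R (x2,y2)) = psum_norm p (x1,y1) + psum_norm p (x2,y2)"
  shows "norm (x1 + l *\<^sub>R x2) = norm x1 + norm x2 \<and> norm (y1 + l *\<^sub>R y2) = norm y1 + norm y2"
proof -
  have "norm (x1 + l *\<^sub>R x2) \<le> norm x1 + norm x2"
    using norm_triangle_ineq[of x1 "l *\<^sub>R x2"] assms(6) by simp
  moreover have "norm (y1 + l *\<^sub>R y2) \<le> norm y1 + norm y2"
    using norm_triangle_ineq[of y1 "l *\<^sub>R y2"] assms(6) by simp
  ultimately show ?thesis
    using key[OF assms(1), of "norm x1" "norm y1" "norm x2" "norm y2"
        "norm (x1 + l *\<^sub>R x2)" "norm (y1 + l *\<^sub>R y2)"] assms(2-5,7)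
    by (simp add: psum_norm_def)
qed

theorem mainTheorem4:
  fixes p :: real
    and x1 x2 :: "'a::real_normed_vector"
    and y1 y2 :: "'b::real_normed_vector"
  assumes "1 \<le> p"
    and "x1 \<noteq> 0" and "x2 \<noteq> 0" and "y1 \<noteq> 0" and "y2 \<noteq> 0"
  shows "(psum_parallel_pair p (x1, y1) (x2, y2) \<longrightarrow> parallel_pair x1 x2 \<and> parallel_pair y1 y2)
       \<and> (psum_tea_pair p (x1, y1) (x2, y2) \<longrightarrow> tea_pair x1 x2 \<and> tea_pair y1 y2)"
proof (intro conjI impI)
  assume "psum_parallel_pair p (x1, y1) (x2, y2)"
  then obtain l where l: "\<bar>l\<bar> = 1" "psum_norm p ((x1,y1) + l *\<^sub>R (x2,y2)) = psum_norm p (x1,y1) + psum_norm p (x2,y2)"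
    unfolding psum_parallel_pair_def by blast
  from comp[OF assms l] l(1) show "parallel_pair x1 x2" "parallel_pair y1 y2"
    unfolding parallel_pair_def by blast+
next
  assume "psum_tea_pair p (x1, y1) (x2, y2)"
  then have "psum_norm p ((x1,y1) + 1 *\<^sub>R (x2,y2)) = psum_norm p (x1,y1) + psum_norm p (x2,y2)"
    unfolding psum_tea_pair_def by simp
  from comp[OF assms _ this] show "tea_pair x1 x2" "tea_pair y1 y2"
    unfolding tea_pair_def by simp_all
qed

end
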